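(* Let $I=[\alpha,\beta]\subset\mathbb R$ and let $f,g:I\to\mathbb R$ be continuous functions such that there exist real numbers $0<m<M$ with $m\le f(x)\le M$ and $m\le g(x)\le M$ for all $x\in I$, and $\max(\|f-g\|_{L^1(I)},\|f-g\|_\infty)<m$. Fix $x_0\in I$ and let $\gamma$ and $\eta$ be the solutions of $\dot x=f(x)$ and $\dot x=g(x)$ respectively with $\gamma(0)=\eta(0)=x_0$, defined (with values in $I$) on intervals of times $J_\gamma$ and $J_\eta$. Then for all $t\in J_\gamma\cap J_\eta$, $$|\gamma(t)-\eta(t)|\le\frac{M}{m^2}\|f-g\|_{L^1(I)}.$$
   Context: $\|\cdot\|_{L^1(I)}$ and $\|\cdot\|_\infty$ are the usual $L^1$ and sup norms on $I$. *)

theory Defs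
  imports "HOL-Analysis.Analysis"
begin

definition L1_norm_on :: "real \<Rightarrow> real \<Rightarrow> (real \<Rightarrow> real) \<Rightarrow> real" where
  "L1_norm_on a b h = integral {a..b} (\<lambda>x. \<bar>h x\<bar>)"

definition sup_norm_on :: "real \<Rightarrow> real \<Rightarrow> (real \<Rightarrow> real) \<Rightarrow> real" where
  "sup_norm_on a b h = (SUP x\<in>{a..b}. \<bar>h x\<bar>)"

end

theory Submission
  imports Defs
begin

lemma int_diff:
  fixes h :: "real \<Rightarrow> real"
  assumes "continuous_on {a..b} h" "a \<le> c" "c \<le> d" "d \<le> b"
  shows "integral {a..d} h - integral {a..c} h = integral {c..d} h"
proof -
  have "h integrable_on {a..d}"
    using assms by (meson atLeastAtMost_iff atLeastatMost_subset_iff continuous_on_subset integrable_continuous_real order_refl)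
  then have "integral {a..c} h + integral {c..d} h = integral {a..d} h"
    by (intro Henstock_Kurzweil_Integration.integral_combine) (use assms in auto)
  then show ?thesis by simp
qed


lemma ctsint:
  fixes h :: "real \<Rightarrow> real"
  assumes "continuous_on {a..b} h" "a \<le> u" "v \<le> b"
  shows "h integrable_on {u..v}"
  using assms by (meson atLeastatMost_subset_iff continuous_on_subset integrable_continuous_real order_refl)

lemma absdiff_le:
  fixes h :: "real \<Rightarrow> real"
  assumes hc: "continuous_on {a..b} h" and u: "u \<in> {a..b}" and v: "v \<in> {a..b}"
  shows "\<bar>integral {a..v} h - integral {a..u} h\<bar> \<le> integral {a..b} (\<lambda>y. \<bar>h y\<bar>)"
proof -
  have hac: "continuous_on {a..b} (\<lambda>y. \<bar>h y\<bar>)" using hc by (intro continuous_intros)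
  have gen: "\<bar>integral {a..q} h - integral {a..p} h\<bar> \<le> integral {a..b} (\<lambda>y. \<bar>h y\<bar>)"
    if "p \<in> {a..b}" "q \<in> {a..b}" "p \<le> q" for p q
  proof -
    have "integral {a..q} h - integral {a..p} h = integral {p..q} h"
      using int_diff[OF hc] that by auto
    moreover have "\<bar>integral {p..q} h\<bar> \<le> integral {p..q} (\<lambda>y. \<bar>h y\<bar>)"
      using integral_norm_bound_integral[of h "{p..q}" "\<lambda>y. \<bar>h y\<bar>"]
        ctsint[OF hc, of p q] ctsint[OF hac, of p q] that by auto
    moreover have "integral {p..q} (\<lambda>y. \<bar>h y\<bar>) \<le> integral {a..b} (\<lambda>y. \<bar>h y\<bar>)"
      by (rule integral_subset_le) (use that ctsint[OF hac, of p q] ctsint[OF hac, of a b] in auto)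
    ultimately show ?thesis by simp
  qed
  show ?thesis
  proof (cases "u \<le> v")
    case True then show ?thesis using gen[OF u v] by simp
  next
    case False then show ?thesis using gen[OF v u] by simp
  qed
qed

lemma lower_diff:
  fixes h :: "real \<Rightarrow> real"
  assumes hc: "continuous_on {a..b} h" and u: "u \<in> {a..b}" and v: "v \<in> {a..b}" and uv: "u \<le> v"
    and lb: "\<And>y. y \<in> {a..b} \<Longrightarrow> c \<le> h y"
  shows "c * (v - u) \<le> integral {a..v} h - integral {a..u} h"
proof -
  have "integral {a..v} h - integral {a..u} h = integral {u..v} h"
    using int_diff[OF hc] u v uv by auto
  moreover have "integral {u..v} (\<lambda>_. c) \<le> integral {u..v} h"
    by (rule integral_le) (use ctsint[OF hc, of u v] u v lb in auto)
  ultimately show ?thesis using uv by (simp add: mult.commute)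
qed

lemma sol_int:
  fixes h x :: "real \<Rightarrow> real"
  assumes hc: "continuous_on {\<alpha>..\<beta>} h" and hp: "\<And>y. y \<in> {\<alpha>..\<beta>} \<Longrightarrow> 0 < h y"
    and J: "is_interval J" "0 \<in> J" and x0: "x 0 = x0" and xJ: "x ` J \<subseteq> {\<alpha>..\<beta>}"
    and d: "\<And>t. t \<in> J \<Longrightarrow> (x has_real_derivative h (x t)) (at t within J)"
  shows "\<forall>t\<in>J. integral {\<alpha>..x t} (\<lambda>y. 1 / h y) - integral {\<alpha>..x0} (\<lambda>y. 1 / h y) = t"
proof -
  define F where "F = (\<lambda>u. integral {\<alpha>..u} (\<lambda>y. 1 / h y))"
  have ic: "continuous_on {\<alpha>..\<beta>} (\<lambda>y. 1 / h y)"
    using hc hp by (intro continuous_intros) (auto dest: hp simp: less_imp_neq[symmetric])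
  have "\<And>t. t \<in> J \<Longrightarrow> ((\<lambda>t. F (x t) - t) has_real_derivative 0) (at t within J)"
  proof -
    fix t assume t: "t \<in> J"
    have xt: "x t \<in> {\<alpha>..\<beta>}" using xJ t by auto
    have "(F has_real_derivative 1 / h (x t)) (at (x t) within {\<alpha>..\<beta>})"
      unfolding F_def by (rule integral_has_real_derivative[OF ic xt])
    hence "(F has_real_derivative 1 / h (x t)) (at (x t) within x ` J)"
      using xJ by (rule has_field_derivative_subset)
    from DERIV_image_chain[OF this d[OF t]]
    have "((\<lambda>t. F (x t)) has_real_derivative 1 / h (x t) * h (x t)) (at t within J)"
      by (simp add: o_def)
    moreover have "1 / h (x t) * h (x t) = 1" using hp[OF xt] by simp
    ultimately have "((\<lambda>t. F (x t)) has_real_derivative 1) (at t within J)" by simp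
    then show "((\<lambda>t. F (x t) - t) has_real_derivative 0) (at t within J)"
      by (auto intro!: derivative_eq_intros)
  qed
  then obtain c where c: "\<forall>t\<in>J. F (x t) - t = c"
    using has_field_derivative_zero_constant[OF is_interval_convex[OF J(1)]] by blast
  have "c = F x0" using c J(2) x0 by force
  then show ?thesis using c unfolding F_def by force
qed

theorem lemma4p1:
  fixes \<alpha> \<beta> m M x0 :: real
    and f g \<gamma> \<eta> :: "real \<Rightarrow> real"
    and J\<gamma> J\<eta> :: "real set"
  assumes "\<alpha> \<le> \<beta>"
    and "continuous_on {\<alpha>..\<beta>} f" and "continuous_on {\<alpha>..\<beta>} g"
    and "0 < m" and "m < M"
    and "\<And>x. x \<in> {\<alpha>..\<beta>} \<Longrightarrow> m \<le> f x \<and> f x \<le> M"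
    and "\<And>x. x \<in> {\<alpha>..\<beta>} \<Longrightarrow> m \<le> g x \<and> g x \<le> M"
    and "max (L1_norm_on \<alpha> \<beta> (\<lambda>x. f x - g x)) (sup_norm_on \<alpha> \<beta> (\<lambda>x. f x - g x)) < m"
    and "x0 \<in> {\<alpha>..\<beta>}"
    and "is_interval J\<gamma>" and "0 \<in> J\<gamma>"
    and "\<gamma> 0 = x0" and "\<gamma> ` J\<gamma> \<subseteq> {\<alpha>..\<beta>}"
    and "\<And>t. t \<in> J\<gamma> \<Longrightarrow> (\<gamma> has_real_derivative f (\<gamma> t)) (at t within J\<gamma>)"
    and "is_interval J\<eta>" and "0 \<in> J\<eta>"
    and "\<eta> 0 = x0" and "\<eta> ` J\<eta> \<subseteq> {\<alpha>..\<beta>}"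
    and "\<And>t. t \<in> J\<eta> \<Longrightarrow> (\<eta> has_real_derivative g (\<eta> t)) (at t within J\<eta>)"
  shows "\<forall>t \<in> J\<gamma> \<inter> J\<eta>. \<bar>\<gamma> t - \<eta> t\<bar> \<le> M / m\<^sup>2 * L1_norm_on \<alpha> \<beta> (\<lambda>x. f x - g x)"
proof
  fix t assume t: "t \<in> J\<gamma> \<inter> J\<eta>"
  let ?L = "L1_norm_on \<alpha> \<beta> (\<lambda>x. f x - g x)"
  have fp: "\<And>y. y \<in> {\<alpha>..\<beta>} \<Longrightarrow> 0 < f y" using assms(4,6) by (meson less_le_trans)
  have gp: "\<And>y. y \<in> {\<alpha>..\<beta>} \<Longrightarrow> 0 < g y" using assms(4,7) by (meson less_le_trans)
  have fic: "continuous_on {\<alpha>..\<beta>} (\<lambda>y. 1 / f y)"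
    using assms(2) fp by (intro continuous_intros) (auto simp: less_imp_neq[symmetric])
  have gic: "continuous_on {\<alpha>..\<beta>} (\<lambda>y. 1 / g y)"
    using assms(3) gp by (intro continuous_intros) (auto simp: less_imp_neq[symmetric])
  define F where "F = (\<lambda>u. integral {\<alpha>..u} (\<lambda>y. 1 / f y))"
  define G where "G = (\<lambda>u. integral {\<alpha>..u} (\<lambda>y. 1 / g y))"
  define k where "k = (\<lambda>y. 1 / f y - 1 / g y)"
  define D where "D = (\<lambda>u. integral {\<alpha>..u} k)"
  have kc: "continuous_on {\<alpha>..\<beta>} k" unfolding k_def by (rule continuous_on_diff[OF fic gic])
  have a: "\<gamma> t \<in> {\<alpha>..\<beta>}" using t assms(13) by auto
  have b: "\<eta> t \<in> {\<alpha>..\<beta>}" using t assms(18) by auto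
  have Fa: "F (\<gamma> t) - F x0 = t"
    using sol_int[OF assms(2) fp assms(10,11,12,13,14)] t unfolding F_def by auto
  have Gb: "G (\<eta> t) - G x0 = t"
    using sol_int[OF assms(3) gp assms(15,16,17,18,19)] t unfolding G_def by auto
  have DFG: "D u = F u - G u" if "u \<in> {\<alpha>..\<beta>}" for u
    unfolding D_def F_def G_def k_def
    by (rule integral_diff) (use ctsint[OF fic, of \<alpha> u] ctsint[OF gic, of \<alpha> u] that in auto)
  have A: "\<bar>D (\<eta> t) - D x0\<bar> \<le> integral {\<alpha>..\<beta>} (\<lambda>y. \<bar>k y\<bar>)"
    unfolding D_def by (rule absdiff_le[OF kc assms(9) b])
  have B: "integral {\<alpha>..\<beta>} (\<lambda>y. \<bar>k y\<bar>) \<le> integral {\<alpha>..\<beta>} (\<lambda>y. \<bar>f y - g y\<bar> / m\<^sup>2)"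
  proof (rule integral_le)
    show "(\<lambda>y. \<bar>k y\<bar>) integrable_on {\<alpha>..\<beta>}"
      using kc by (intro integrable_continuous_real continuous_intros)
    show "(\<lambda>y. \<bar>f y - g y\<bar> / m\<^sup>2) integrable_on {\<alpha>..\<beta>}"
      using assms(2,3) by (intro integrable_continuous_real continuous_intros) (use assms(4) in auto)
    fix y assume y: "y \<in> {\<alpha>..\<beta>}"
    have f1: "m \<le> f y" and g1: "m \<le> g y" using assms(6,7)[OF y] by auto
    have "\<bar>k y\<bar> = \<bar>f y - g y\<bar> / (f y * g y)"
      using fp[OF y] gp[OF y] unfolding k_def by (simp add: field_simps abs_div abs_mult abs_minus_commute)
    also have "\<dots> \<le> \<bar>f y - g y\<bar> / m\<^sup>2"
      using f1 g1 assms(4) by (intro divide_left_mono) (auto simp: power2_eq_square intro: mult_mono)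
    finally show "\<bar>k y\<bar> \<le> \<bar>f y - g y\<bar> / m\<^sup>2" .
  qed
  have B2: "integral {\<alpha>..\<beta>} (\<lambda>y. \<bar>f y - g y\<bar> / m\<^sup>2) = ?L / m\<^sup>2"
    unfolding L1_norm_on_def by simp
  have C: "\<bar>p - q\<bar> \<le> M * \<bar>F p - F q\<bar>" if p: "p \<in> {\<alpha>..\<beta>}" and q: "q \<in> {\<alpha>..\<beta>}" for p q
  proof -
    have lb: "\<And>y. y \<in> {\<alpha>..\<beta>} \<Longrightarrow> 1 / M \<le> 1 / f y"
      using assms(6) fp by (simp add: frac_le)
    have M0: "0 < M" using assms(4,5) by simp
    show ?thesis
    proof (cases "p \<le> q")
      case True
      from lower_diff[OF fic p q True lb] have "(q - p) / M \<le> F q - F p" unfolding F_def by simp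
      then have "q - p \<le> M * (F q - F p)" using M0 by (simp add: field_simps)
      then show ?thesis using M0 True by (smt (verit) mult_left_mono abs_ge_self abs_minus_commute)
    next
      case False
      from lower_diff[OF fic q p _ lb] False have "(p - q) / M \<le> F p - F q" unfolding F_def by simp
      then have "p - q \<le> M * (F p - F q)" using M0 by (simp add: field_simps)
      then show ?thesis using M0 False by (smt (verit) mult_left_mono abs_ge_self abs_minus_commute)
    qed
  qed
  have eq: "F (\<gamma> t) - F (\<eta> t) = - (D (\<eta> t) - D x0)"
    using Fa Gb DFG[OF b] DFG[OF assms(9)] by simp
  have M0: "0 \<le> M" using assms(4,5) by simp
  have "\<bar>\<gamma> t - \<eta> t\<bar> \<le> M * \<bar>D (\<eta> t) - D x0\<bar>" using C[OF a b] eq abs_minus_commute[of "D x0" "D (\<eta> t)"] by simp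
  also have "\<dots> \<le> M * (?L / m\<^sup>2)"
    using A B B2 M0 by (intro mult_left_mono) auto
  finally show "\<bar>\<gamma> t - \<eta> t\<bar> \<le> M / m\<^sup>2 * ?L" by simp
qed

end
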